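(* Let $p/q$ be an even rational parameter, $\omega=p+q$, $P=2p/\omega$. Let $\Lambda_P\subset\mathbb R^3$ be the lattice generated by $(2,P,P)$, $(0,2,0)$, $(0,0,2)$, let $\mathcal C=\{(m+\tfrac12,n+\tfrac12): m,n\in\mathbb Z\}$, let $L\subset\mathbb Z^2$ be the lattice generated by $(\omega^2,0)$ and $(0,\omega)$, and let $\mathcal X=\frac{\mathbb Z_1}{\omega}\times\frac{\mathbb Z_0}{\omega}\times\frac{\mathbb Z_0}{\omega}\subset\mathbb R^3$, where $\mathbb Z_0$ and $\mathbb Z_1$ are the even and the odd integers. Define $\Xi:\mathbb R^2\to\mathbb R^3/\Lambda_P$ by $\Xi(x,y)=(2Px+2y,\,2Px,\,2Px+2Py)\bmod\Lambda_P$. Then $\Xi$ induces a well-defined map $\mathcal C/L\to\mathcal X/\Lambda_P$, and this map is a bijection.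
   Context: An even rational parameter is a rational $p/q\in(0,1)$, with $p,q$ positive coprime integers, such that $pq$ is even. Note $\Lambda_P$ preserves $\mathcal X$. *)

theory Defs
  imports "HOL-Analysis.Analysis"
begin

definition even_rational_param :: "nat \<Rightarrow> nat \<Rightarrow> bool" where
  "even_rational_param p q \<longleftrightarrow> 0 < p \<and> p < q \<and> coprime p q \<and> even (p * q)"

definition LambdaP :: "real \<Rightarrow> (real \<times> real \<times> real) set" where
  "LambdaP P = {(2 * of_int a, P * of_int a + 2 * of_int b, P * of_int a + 2 * of_int c)
                 | a b c :: int. True}"

definition halfC :: "(real \<times> real) set" where
  "halfC = {(of_int m + 1/2, of_int n + 1/2) | m n :: int. True}"

definition latL :: "nat \<Rightarrow> (real \<times> real) set" where
  "latL w = {(real w ^ 2 * of_int a, real w * of_int b) | a b :: int. True}"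

definition setX :: "nat \<Rightarrow> (real \<times> real \<times> real) set" where
  "setX w = {(of_int a / real w, of_int b / real w, of_int c / real w)
              | a b c :: int. odd a \<and> even b \<and> even c}"

definition Xi :: "real \<Rightarrow> real \<times> real \<Rightarrow> real \<times> real \<times> real" where
  "Xi P z = (2 * P * fst z + 2 * snd z, 2 * P * fst z, 2 * P * fst z + 2 * P * snd z)"

definition relC :: "nat \<Rightarrow> ((real \<times> real) \<times> (real \<times> real)) set" where
  "relC w = {(u, v). u \<in> halfC \<and> v \<in> halfC \<and> u - v \<in> latL w}"

definition relX :: "nat \<Rightarrow> real \<Rightarrow> ((real \<times> real \<times> real) \<times> (real \<times> real \<times> real)) set" where
  "relX w P = {(u, v). u \<in> setX w \<and> v \<in> setX w \<and> u - v \<in> LambdaP P}"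

text \<open>Induced map on classes: a class A in C/L goes to the class of X/Lambda_P
  containing the images Xi(c), c in A.\<close>
definition XiBar :: "nat \<Rightarrow> real \<Rightarrow> (real \<times> real) set \<Rightarrow> (real \<times> real \<times> real) set" where
  "XiBar w P A = {x \<in> setX w. \<exists>c\<in>A. Xi P c - x \<in> LambdaP P}"

end

theory Submission imports Defs begin


definition repr :: "int \<Rightarrow> int \<Rightarrow> int \<Rightarrow> int \<Rightarrow> int \<Rightarrow> bool" where
  "repr p w X Y Z \<longleftrightarrow> (\<exists>m n a b c. X = 4*p*m + 2*w*n - 2*w*a \<and> Y = 2*p*m - p*a - w*b
     \<and> Z = 2*p*m + 2*p*n - p*a - w*c)"

lemma repr_add: assumes "repr p w X Y Z" "repr p w X' Y' Z'" shows "repr p w (X+X') (Y+Y') (Z+Z')"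
proof -
  from assms(1) obtain m n a b c where h: "X = 4*p*m + 2*w*n - 2*w*a" "Y = 2*p*m - p*a - w*b"
     "Z = 2*p*m + 2*p*n - p*a - w*c" unfolding repr_def by blast
  from assms(2) obtain m' n' a' b' c' where h': "X' = 4*p*m' + 2*w*n' - 2*w*a'" "Y' = 2*p*m' - p*a' - w*b'"
     "Z' = 2*p*m' + 2*p*n' - p*a' - w*c'" unfolding repr_def by blast
  show ?thesis unfolding repr_def h h'
    by (rule exI[of _ "m+m'"], rule exI[of _ "n+n'"], rule exI[of _ "a+a'"], rule exI[of _ "b+b'"],
        rule exI[of _ "c+c'"]) (simp add: algebra_simps)
qed

lemma repr_scale: assumes "repr p w X Y Z" shows "repr p w (k*X) (k*Y) (k*Z)"
proof -
  from assms(1) obtain m n a b c where h: "X = 4*p*m + 2*w*n - 2*w*a" "Y = 2*p*m - p*a - w*b"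
     "Z = 2*p*m + 2*p*n - p*a - w*c" unfolding repr_def by blast
  show ?thesis unfolding repr_def h
    by (rule exI[of _ "k*m"], rule exI[of _ "k*n"], rule exI[of _ "k*a"], rule exI[of _ "k*b"],
        rule exI[of _ "k*c"]) (simp add: algebra_simps)
qed

lemma repr_all:
  fixes p w :: int
  assumes cop: "coprime p w" and ow: "odd w" and ev: "even X"
  shows "repr p w X Y Z"
proof -
  have c2: "coprime 2 w" using ow by simp
  have c4: "coprime (4*p^2) w"
  proof -
    have c2p: "coprime (2*p) w" using c2 cop by (simp add: coprime_mult_left_iff)
    have "coprime ((2*p)^2) w" using c2p by (metis coprime_power_left_iff)
    moreover have "(2*p)^2 = 4*p^2" by (simp add: power_mult_distrib)
    ultimately show ?thesis by metis
  qed
  have c2p: "coprime (2*p) w" using c2 cop by (simp add: coprime_mult_left_iff)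
  obtain s t where st: "s*(4*p^2) + t*w = 1" using bezout_int[of "4*p^2" w] c4
    by (auto simp: coprime_iff_gcd_eq_1)
  have e3: "repr p w 0 0 1"
    unfolding repr_def
    apply (rule exI[of _ "- s*w"], rule exI[of _ "2*p* s"], rule exI[of _ "0"], rule exI[of _ "- 2*p* s"],
        rule exI[of _ "- t - 2*p* s"])
    using st by (simp add: algebra_simps power2_eq_square)
  have v1: "repr p w 0 (-p) p" unfolding repr_def
    by (rule exI[of _ 0], rule exI[of _ 1], rule exI[of _ 1], rule exI[of _ 0],
        rule exI[of _ 0]) simp
  have "repr p w (-p*0) (-p*0) (-p*1)" by (rule repr_scale[OF e3])
  from repr_add[OF v1 this] have v2: "repr p w 0 (-p) 0" by simp
  have v3: "repr p w 0 (-w) 0" unfolding repr_def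
    by (rule exI[of _ 0], rule exI[of _ 0], rule exI[of _ 0], rule exI[of _ 1],
        rule exI[of _ 0]) simp
  obtain s1 t1 where st1: "s1*p + t1*w = 1" using bezout_int[of p w] cop
    by (auto simp: coprime_iff_gcd_eq_1)
  have "repr p w (-s1*0 + -t1*0) (-s1*(-p) + -t1*(-w)) (-s1*0 + -t1*0)"
    by (rule repr_add[OF repr_scale[OF v2] repr_scale[OF v3]])
  then have e2: "repr p w 0 1 0" using st1 by (simp add: algebra_simps)
  have vN: "repr p w (2*w) 0 (2*p)" unfolding repr_def
    by (rule exI[of _ 0], rule exI[of _ 1], rule exI[of _ 0], rule exI[of _ 0],
        rule exI[of _ 0]) simp
  have vM: "repr p w (4*p) (2*p) (2*p)" unfolding repr_def
    by (rule exI[of _ 1], rule exI[of _ 0], rule exI[of _ 0], rule exI[of _ 0],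
        rule exI[of _ 0]) simp
  have "repr p w (2*w + -2*p*0) (0 + -2*p*0) (2*p + -2*p*1)"
    by (rule repr_add[OF vN repr_scale[OF e3]])
  then have w1: "repr p w (2*w) 0 0" by simp
  have "repr p w (4*p + -2*p*0 + -2*p*0) (2*p + -2*p*1 + -2*p*0) (2*p + -2*p*0 + -2*p*1)"
    by (rule repr_add[OF repr_add[OF vM repr_scale[OF e2]] repr_scale[OF e3]])
  then have w2: "repr p w (4*p) 0 0" by simp
  obtain s2 t2 where st2: "s2*(2*p) + t2*w = 1" using bezout_int[of "2*p" w] c2p
    by (auto simp: coprime_iff_gcd_eq_1)
  have "repr p w (s2*(4*p) + t2*(2*w)) (s2*0+t2*0) (s2*0+t2*0)"
    by (rule repr_add[OF repr_scale[OF w2] repr_scale[OF w1]])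
  moreover have "s2*(4*p) + t2*(2*w) = 2" using st2 by (simp add: algebra_simps)
  ultimately have e1: "repr p w 2 0 0" by simp
  obtain X' where X': "X = 2*X'" using ev by blast
  have "repr p w (X'*2 + Y*0 + Z*0) (X'*0 + Y*1 + Z*0) (X'*0 + Y*0 + Z*1)"
    by (rule repr_add[OF repr_add[OF repr_scale[OF e1] repr_scale[OF e2]] repr_scale[OF e3]])
  then show ?thesis using X' by (simp add: mult.commute)
qed


lemma inj_int:
  fixes p w M N a b c :: int
  assumes cop: "coprime p w" and ow: "odd w" and p0: "p \<noteq> 0"
    and e1: "4*p*M + 2*w*N = 2*a*w" and e2: "4*p*M = 2*p*a + 2*b*w"
    and e3: "4*p*(M+N) = 2*p*a + 2*c*w"
  shows "\<exists>A B. M = w^2*A \<and> N = w*B"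
proof -
  have c2: "coprime 2 w" using ow by simp
  have c2p: "coprime (2*p) w" using c2 cop by (simp add: coprime_mult_left_iff)
  have c4p: "coprime (4*p) w"
  proof -
    have "coprime (2*(2*p)) w" using c2 c2p by (simp only: coprime_mult_left_iff)
    then show ?thesis by simp
  qed
  have e1': "2*p*M = w*(a - N)" using e1 by (simp add: algebra_simps)
  have "w dvd 2*p*M" using e1' by simp
  then have "w dvd M" using c2p by (metis coprime_commute coprime_dvd_mult_right_iff)
  then obtain M1 where M1: "M = w*M1" by blast
  have e2': "2*p*w*M1 = p*a + b*w" using e2 M1 by (simp add: algebra_simps)
  have "b*w = p*(2*w*M1 - a)" using e2' by (simp add: algebra_simps)
  then have "p dvd b*w" by simp
  then have "p dvd b" using cop by (metis coprime_dvd_mult_left_iff)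
  then obtain b1 where b1: "b = p*b1" by blast
  have "p*(2*w*M1) = p*(a + b1*w)" using e2' b1 by (simp add: algebra_simps)
  then have a1: "a = 2*w*M1 - b1*w" using p0 by simp
  have N1: "N = w*(2*M1 - b1) - 2*p*M1"
  proof -
    have "w*(2*p*M1) = w*(a - N)" using e1' M1 by (simp add: algebra_simps)
    then have "2*p*M1 = a - N"
    proof -
      have "w \<noteq> 0" using ow by auto
      then show ?thesis using \<open>w*(2*p*M1) = w*(a - N)\<close> by simp
    qed
    then show ?thesis using a1 by (simp add: algebra_simps)
  qed
  have "2*(c*w) = 2*(p*(2*(M+N) - a))" using e3 by (simp add: algebra_simps)
  then have "c*w = p*(2*(M+N) - a)" by simp
  then have "p dvd c*w" by simp
  then have "p dvd c" using cop by (metis coprime_dvd_mult_left_iff)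
  then obtain c1 where c1: "c = p*c1" by blast
  have "p*(4*(M+N)) = p*(2*a + 2*c1*w)" using e3 c1 by (simp add: algebra_simps)
  then have "4*(M+N) = 2*a + 2*c1*w" using p0 by simp
  then have "4*p*M1 = w*(2*M1 + 2*(2*M1-b1) - (2*M1 - b1) - c1) * 2 div 2"
    using M1 N1 a1 by (simp add: algebra_simps)
  then have "4*p*M1 = w*(2*M1 + 2*(2*M1-b1) - (2*M1 - b1) - c1)" by simp
  then have "w dvd 4*p*M1" by simp
  then have "w dvd M1" using c4p by (metis coprime_commute coprime_dvd_mult_right_iff)
  then obtain M2 where M2: "M1 = w*M2" by blast
  show ?thesis
    by (rule exI[of _ M2], rule exI[of _ "2*M1 - b1 - 2*p*M2"])
      (simp add: M1 M2 N1 algebra_simps power2_eq_square)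
qed



lemma lam_iff:
  fixes p w :: nat and X Y Z :: int
  assumes w0: "w > 0"
  shows "(of_int X / real w, of_int Y / real w, of_int Z / real w) \<in> LambdaP (2 * real p / real w)
    \<longleftrightarrow> (\<exists>a b c::int. X = 2*a*int w \<and> Y = 2*int p*a + 2*b*int w \<and> Z = 2*int p*a + 2*c*int w)"
proof -
  have W: "real w \<noteq> 0" using w0 by simp
  have k1: "\<And>a. (of_int X / real w = 2 * of_int a) \<longleftrightarrow> X = 2*a*int w"
  proof -
    fix a :: int
    have "(of_int X / real w = 2 * of_int a) \<longleftrightarrow> (of_int X = (of_int (2*a*int w)::real))"
      using W by (simp add: field_simps)
    then show "(of_int X / real w = 2 * of_int a) \<longleftrightarrow> X = 2*a*int w" by (simp only: of_int_eq_iff)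
  qed
  have k2: "\<And>a b. (of_int Y / real w = 2 * real p / real w * of_int a + 2 * of_int b)
      \<longleftrightarrow> Y = 2*int p*a + 2*b*int w"
  proof -
    fix a b :: int
    have "(of_int Y / real w = 2 * real p / real w * of_int a + 2 * of_int b)
       \<longleftrightarrow> (of_int Y = (of_int (2*int p*a + 2*b*int w)::real))"
      using W by (simp add: field_simps)
    then show "(of_int Y / real w = 2 * real p / real w * of_int a + 2 * of_int b)
      \<longleftrightarrow> Y = 2*int p*a + 2*b*int w" by (simp only: of_int_eq_iff)
  qed
  have k3: "\<And>a b. (of_int Z / real w = 2 * real p / real w * of_int a + 2 * of_int b)
      \<longleftrightarrow> Z = 2*int p*a + 2*b*int w"
  proof -
    fix a b :: int
    have "(of_int Z / real w = 2 * real p / real w * of_int a + 2 * of_int b)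
       \<longleftrightarrow> (of_int Z = (of_int (2*int p*a + 2*b*int w)::real))"
      using W by (simp add: field_simps)
    then show "(of_int Z / real w = 2 * real p / real w * of_int a + 2 * of_int b)
      \<longleftrightarrow> Z = 2*int p*a + 2*b*int w" by (simp only: of_int_eq_iff)
  qed
  have "(of_int X / real w, of_int Y / real w, of_int Z / real w) \<in> LambdaP (2 * real p / real w)
    \<longleftrightarrow> (\<exists>a b c::int. of_int X / real w = 2 * of_int a
       \<and> of_int Y / real w = 2 * real p / real w * of_int a + 2 * of_int b
       \<and> of_int Z / real w = 2 * real p / real w * of_int a + 2 * of_int c)"
    unfolding LambdaP_def by auto
  also have "\<dots> \<longleftrightarrow> (\<exists>a b c::int. X = 2*a*int w \<and> Y = 2*int p*a + 2*b*int w \<and> Z = 2*int p*a + 2*c*int w)"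
    by (simp only: k1 k2 k3)
  finally show ?thesis .
qed


lemma latL_iff:
  fixes M N :: int
  shows "(of_int M, of_int N) \<in> latL w \<longleftrightarrow> (\<exists>A B::int. M = int w^2 * A \<and> N = int w * B)"
proof -
  have "(of_int M, of_int N) \<in> latL w \<longleftrightarrow>
     (\<exists>A B::int. (of_int M::real) = of_int (int w^2 * A) \<and> (of_int N::real) = of_int (int w * B))"
    unfolding latL_def by auto
  also have "\<dots> \<longleftrightarrow> (\<exists>A B::int. M = int w^2 * A \<and> N = int w * B)"
    by (simp only: of_int_eq_iff)
  finally show ?thesis .
qed

lemma Xi_half:
  assumes w0: "w > 0"
  shows "Xi (2*real p/real w) (of_int m + 1/2, of_int n + 1/2) =
    (of_int (2*int p*(2*m+1) + int w*(2*n+1)) / real w, of_int (2*int p*(2*m+1)) / real w,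
     of_int (2*int p*(2*m+2*n+2)) / real w)"
  using w0 by (simp add: Xi_def field_simps)

lemma diff3: "(of_int a/real w, of_int b/real w, of_int c/real w) - (of_int a'/real w, of_int b'/real w, of_int c'/real w)
   = (of_int (a - a')/real w, of_int (b - b')/real w, of_int (c - c')/real w)"
  by (simp add: diff_divide_distrib)

lemma halfC_E: assumes "c \<in> halfC" obtains m n :: int where "c = (of_int m + 1/2, of_int n + 1/2)"
  using assms unfolding halfC_def by auto

context
  fixes p w :: nat
  assumes w0: "w > 0" and p0: "p > 0" and cop: "coprime (int p) (int w)" and ow: "odd (int w)"
begin

lemma C1: assumes "c \<in> halfC" shows "Xi (2*real p/real w) c \<in> setX w"
proof -
  obtain m n where c: "c = (of_int m + 1/2, of_int n + 1/2)" using assms by (rule halfC_E)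
  show ?thesis unfolding c Xi_half[OF w0] setX_def mem_Collect_eq
    apply (rule exI[of _ "2*int p*(2*m+1) + int w*(2*n+1)"], rule exI[of _ "2*int p*(2*m+1)"],
      rule exI[of _ "2*int p*(2*m+2*n+2)"])
    using ow by simp
qed

lemma C2:
  assumes "c \<in> halfC" "c' \<in> halfC"
  shows "c - c' \<in> latL w \<longleftrightarrow> Xi (2*real p/real w) c - Xi (2*real p/real w) c' \<in> LambdaP (2*real p/real w)"
proof -
  obtain m n where c: "c = (of_int m + 1/2, of_int n + 1/2)" using assms(1) by (rule halfC_E)
  obtain m' n' where c': "c' = (of_int m' + 1/2, of_int n' + 1/2)" using assms(2) by (rule halfC_E)
  define M where "M = m - m'"
  define N where "N = n - n'"
  have cd: "c - c' = (of_int M, of_int N)" unfolding c c' M_def N_def by simp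
  have d1: "(2*int p*(2*m+1) + int w*(2*n+1)) - (2*int p*(2*m'+1) + int w*(2*n'+1)) = 4*int p*M + 2*int w*N"
    unfolding M_def N_def by (simp add: algebra_simps)
  have d2: "2*int p*(2*m+1) - 2*int p*(2*m'+1) = 4*int p*M"
    unfolding M_def N_def by (simp add: algebra_simps)
  have d3: "2*int p*(2*m+2*n+2) - 2*int p*(2*m'+2*n'+2) = 4*int p*(M+N)"
    unfolding M_def N_def by (simp add: algebra_simps)
  have "Xi (2*real p/real w) c - Xi (2*real p/real w) c' \<in> LambdaP (2*real p/real w) \<longleftrightarrow>
     (\<exists>a b cc::int. 4*int p*M + 2*int w*N = 2*a*int w \<and> 4*int p*M = 2*int p*a + 2*b*int w
        \<and> 4*int p*(M+N) = 2*int p*a + 2*cc*int w)"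
    unfolding c c' Xi_half[OF w0] diff3 d1 d2 d3 lam_iff[OF w0] by simp
  also have "\<dots> \<longleftrightarrow> (\<exists>A B::int. M = int w^2 * A \<and> N = int w * B)"
  proof
    assume "\<exists>a b cc::int. 4*int p*M + 2*int w*N = 2*a*int w \<and> 4*int p*M = 2*int p*a + 2*b*int w
        \<and> 4*int p*(M+N) = 2*int p*a + 2*cc*int w"
    then obtain a b cc where e: "4*int p*M + 2*int w*N = 2*a*int w" "4*int p*M = 2*int p*a + 2*b*int w"
        "4*int p*(M+N) = 2*int p*a + 2*cc*int w" by blast
    show "\<exists>A B::int. M = int w^2 * A \<and> N = int w * B"
      by (rule inj_int[OF cop ow _ e]) (use p0 in simp)
  next
    assume "\<exists>A B::int. M = int w^2 * A \<and> N = int w * B"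
    then obtain A B where AB: "M = int w^2 * A" "N = int w * B" by blast
    show "\<exists>a b cc::int. 4*int p*M + 2*int w*N = 2*a*int w \<and> 4*int p*M = 2*int p*a + 2*b*int w
        \<and> 4*int p*(M+N) = 2*int p*a + 2*cc*int w"
      by (rule exI[of _ "2*int p*int w*A + int w*B"], rule exI[of _ "2*int p*(int w - int p)*A - int p*B"],
          rule exI[of _ "2*int p*(int w - int p)*A + int p*B"])
        (simp add: AB algebra_simps power2_eq_square)
  qed
  finally show ?thesis unfolding cd latL_iff by simp
qed

lemma C3: assumes "x \<in> setX w"
  shows "\<exists>c\<in>halfC. Xi (2*real p/real w) c - x \<in> LambdaP (2*real p/real w)"
proof -
  obtain al be ga :: int where x: "x = (of_int al / real w, of_int be / real w, of_int ga / real w)"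
    and par: "odd al" "even be" "even ga" using assms unfolding setX_def by blast
  obtain be' where be: "be = 2*be'" using par(2) by blast
  obtain ga' where ga: "ga = 2*ga'" using par(3) by blast
  have "even (al - 2*int p - int w)" using par(1) ow by simp
  then have "repr (int p) (int w) (al - 2*int p - int w) (be' - int p) (ga' - 2*int p)"
    by (rule repr_all[OF cop ow])
  then obtain m n a b cc where h: "al - 2*int p - int w = 4*int p*m + 2*int w*n - 2*int w*a"
    "be' - int p = 2*int p*m - int p*a - int w*b"
    "ga' - 2*int p = 2*int p*m + 2*int p*n - int p*a - int w*cc" unfolding repr_def by blast
  have hc: "(of_int m + 1/2, of_int n + 1/2) \<in> halfC" unfolding halfC_def by auto
  have "Xi (2*real p/real w) (of_int m + 1/2, of_int n + 1/2) - x \<in> LambdaP (2*real p/real w)"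
    unfolding x Xi_half[OF w0] diff3 lam_iff[OF w0]
    by (rule exI[of _ a], rule exI[of _ b], rule exI[of _ cc]) (use h be ga in \<open>simp add: algebra_simps\<close>)
  then show ?thesis using hc by blast
qed

end


lemma equiv_diff:
  fixes G :: "'a::ab_group_add set"
  assumes z: "0 \<in> G" and ad: "\<And>x y. x\<in>G \<Longrightarrow> y\<in>G \<Longrightarrow> x+y \<in> G" and ng: "\<And>x. x\<in>G \<Longrightarrow> -x \<in> G"
  shows "equiv A {(u,v). u\<in>A \<and> v\<in>A \<and> u - v \<in> G}"
proof (rule equivI)
  show "{(u,v). u\<in>A \<and> v\<in>A \<and> u - v \<in> G} \<subseteq> A \<times> A" by auto
  show "refl_on A {(u,v). u\<in>A \<and> v\<in>A \<and> u - v \<in> G}" unfolding refl_on_def using z by auto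
  show "sym {(u,v). u\<in>A \<and> v\<in>A \<and> u - v \<in> G}" unfolding sym_def
  proof (intro allI impI)
    fix x y assume "(x,y) \<in> {(u,v). u\<in>A \<and> v\<in>A \<and> u - v \<in> G}"
    then have "x \<in> A" "y \<in> A" "x - y \<in> G" by auto
    moreover have "-(x - y) \<in> G" using ng \<open>x - y \<in> G\<close> by blast
    moreover have "-(x - y) = y - x" by simp
    ultimately show "(y,x) \<in> {(u,v). u\<in>A \<and> v\<in>A \<and> u - v \<in> G}" by auto
  qed
  show "trans {(u,v). u\<in>A \<and> v\<in>A \<and> u - v \<in> G}" unfolding trans_def
  proof (intro allI impI)
    fix x y zz assume "(x,y) \<in> {(u,v). u\<in>A \<and> v\<in>A \<and> u - v \<in> G}" "(y,zz) \<in> {(u,v). u\<in>A \<and> v\<in>A \<and> u - v \<in> G}"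
    then have "x \<in> A" "zz \<in> A" "x - y \<in> G" "y - zz \<in> G" by auto
    moreover have "(x - y) + (y - zz) \<in> G" using ad \<open>x - y \<in> G\<close> \<open>y - zz \<in> G\<close> by blast
    moreover have "(x - y) + (y - zz) = x - zz" by simp
    ultimately show "(x,zz) \<in> {(u,v). u\<in>A \<and> v\<in>A \<and> u - v \<in> G}" using ad by auto
  qed
qed

lemma lam_zero: "0 \<in> LambdaP P"
  unfolding LambdaP_def mem_Collect_eq
  by (rule exI[of _ 0], rule exI[of _ 0], rule exI[of _ 0]) (simp add: zero_prod_def)

lemma lam_add: assumes "u \<in> LambdaP P" "v \<in> LambdaP P" shows "u + v \<in> LambdaP P"
proof -
  obtain a b c :: int where u: "u = (2 * of_int a, P * of_int a + 2 * of_int b, P * of_int a + 2 * of_int c)"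
    using assms(1) unfolding LambdaP_def by blast
  obtain a' b' c' :: int where v: "v = (2 * of_int a', P * of_int a' + 2 * of_int b', P * of_int a' + 2 * of_int c')"
    using assms(2) unfolding LambdaP_def by blast
  show ?thesis unfolding LambdaP_def mem_Collect_eq u v
    by (rule exI[of _ "a+a'"], rule exI[of _ "b+b'"], rule exI[of _ "c+c'"]) (simp add: algebra_simps)
qed

lemma lam_neg: assumes "u \<in> LambdaP P" shows "- u \<in> LambdaP P"
proof -
  obtain a b c :: int where u: "u = (2 * of_int a, P * of_int a + 2 * of_int b, P * of_int a + 2 * of_int c)"
    using assms(1) unfolding LambdaP_def by blast
  show ?thesis unfolding LambdaP_def mem_Collect_eq u
    by (rule exI[of _ "-a"], rule exI[of _ "-b"], rule exI[of _ "-c"]) (simp add: algebra_simps)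
qed

lemma latL_zero: "0 \<in> latL w"
  unfolding latL_def mem_Collect_eq
  by (rule exI[of _ 0], rule exI[of _ 0]) (simp add: zero_prod_def)

lemma latL_add: assumes "u \<in> latL w" "v \<in> latL w" shows "u + v \<in> latL w"
proof -
  obtain a b :: int where u: "u = (real w ^ 2 * of_int a, real w * of_int b)"
    using assms(1) unfolding latL_def by blast
  obtain a' b' :: int where v: "v = (real w ^ 2 * of_int a', real w * of_int b')"
    using assms(2) unfolding latL_def by blast
  show ?thesis unfolding latL_def mem_Collect_eq u v
    by (rule exI[of _ "a+a'"], rule exI[of _ "b+b'"]) (simp add: algebra_simps)
qed

lemma latL_neg: assumes "u \<in> latL w" shows "- u \<in> latL w"
proof -
  obtain a b :: int where u: "u = (real w ^ 2 * of_int a, real w * of_int b)"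
    using assms(1) unfolding latL_def by blast
  show ?thesis unfolding latL_def mem_Collect_eq u
    by (rule exI[of _ "-a"], rule exI[of _ "-b"]) (simp add: algebra_simps)
qed

lemma equiv_relC: "equiv halfC (relC w)"
  unfolding relC_def by (rule equiv_diff[OF latL_zero latL_add latL_neg])

lemma equiv_relX: "equiv (setX w) (relX w P)"
  unfolding relX_def by (rule equiv_diff[OF lam_zero lam_add lam_neg])

theorem lemma3p1:
  fixes p q :: nat
  assumes "even_rational_param p q"
  defines "w \<equiv> p + q"
  defines "P \<equiv> 2 * real p / real w"
  shows "(\<forall>c\<in>halfC. \<exists>x\<in>setX w. Xi P c - x \<in> LambdaP P)
       \<and> (\<forall>c c'. (c, c') \<in> relC w \<longrightarrow> Xi P c - Xi P c' \<in> LambdaP P)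
       \<and> bij_betw (XiBar w P) (halfC // relC w) (setX w // relX w P)"
proof -
  from assms(1) have p0: "p > 0" and pq: "p < q" and cpq: "coprime p q" and ev: "even (p*q)"
    unfolding even_rational_param_def by auto
  have w0: "w > 0" unfolding w_def using p0 by simp
  have nb: "\<not> (even p \<and> even q)"
  proof
    assume "even p \<and> even q"
    then have "is_unit (2::nat)" using cpq by (auto dest: coprime_common_divisor)
    then show False by simp
  qed
  have ow: "odd (int w)" unfolding w_def using ev nb by auto
  have cop: "coprime (int p) (int w)" unfolding w_def using cpq
    by (simp add: coprime_iff_gcd_eq_1)
  note C1' = C1[OF w0 p0 cop ow, folded P_def]
  note C2' = C2[OF w0 p0 cop ow, folded P_def]
  note C3' = C3[OF w0 p0 cop ow, folded P_def]
  have part1: "\<forall>c\<in>halfC. \<exists>x\<in>setX w. Xi P c - x \<in> LambdaP P"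
  proof
    fix c assume c: "c \<in> halfC"
    show "\<exists>x\<in>setX w. Xi P c - x \<in> LambdaP P"
      by (rule bexI[of _ "Xi P c"]) (simp_all add: lam_zero C1'[OF c])
  qed
  have part2: "\<forall>c c'. (c, c') \<in> relC w \<longrightarrow> Xi P c - Xi P c' \<in> LambdaP P"
    using C2' unfolding relC_def by auto
  have eC: "equiv halfC (relC w)" by (rule equiv_relC)
  have eX: "equiv (setX w) (relX w P)" by (rule equiv_relX)
  have cls: "XiBar w P (relC w `` {c}) = relX w P `` {Xi P c}" if c: "c \<in> halfC" for c
  proof
    show "XiBar w P (relC w `` {c}) \<subseteq> relX w P `` {Xi P c}"
    proof
      fix x assume "x \<in> XiBar w P (relC w `` {c})"
      then obtain c' where x: "x \<in> setX w" and c': "(c, c') \<in> relC w" and d: "Xi P c' - x \<in> LambdaP P"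
        unfolding XiBar_def by auto
      have "Xi P c - Xi P c' \<in> LambdaP P" using part2 c' by blast
      from lam_add[OF this d] have "Xi P c - x \<in> LambdaP P" by simp
      then show "x \<in> relX w P `` {Xi P c}" unfolding relX_def using x C1'[OF c] by auto
    qed
  next
    show "relX w P `` {Xi P c} \<subseteq> XiBar w P (relC w `` {c})"
    proof
      fix x assume "x \<in> relX w P `` {Xi P c}"
      then have x: "x \<in> setX w" "Xi P c - x \<in> LambdaP P" unfolding relX_def by auto
      have "(c, c) \<in> relC w" unfolding relC_def using c latL_zero by simp
      then show "x \<in> XiBar w P (relC w `` {c})" unfolding XiBar_def using x by blast
    qed
  qed
  have inj: "inj_on (XiBar w P) (halfC // relC w)"
  proof (rule inj_onI)
    fix A B assume A: "A \<in> halfC // relC w" and B: "B \<in> halfC // relC w" and eq: "XiBar w P A = XiBar w P B"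
    obtain c where c: "A = relC w `` {c}" "c \<in> halfC" using A by (rule quotientE)
    obtain c' where c': "B = relC w `` {c'}" "c' \<in> halfC" using B by (rule quotientE)
    have "relX w P `` {Xi P c} = relX w P `` {Xi P c'}" using eq cls c c' by simp
    then have "(Xi P c, Xi P c') \<in> relX w P"
      using eq_equiv_class_iff[OF eX C1'[OF c(2)] C1'[OF c'(2)]] by simp
    then have "Xi P c - Xi P c' \<in> LambdaP P" unfolding relX_def by simp
    then have "c - c' \<in> latL w" using C2'[OF c(2) c'(2)] by simp
    then have "(c, c') \<in> relC w" unfolding relC_def using c c' by simp
    then show "A = B" using c c' equiv_class_eq[OF eC] by simp
  qed
  have img: "XiBar w P ` (halfC // relC w) = setX w // relX w P"
  proof
    show "XiBar w P ` (halfC // relC w) \<subseteq> setX w // relX w P"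
    proof
      fix Y assume "Y \<in> XiBar w P ` (halfC // relC w)"
      then obtain A where A: "A \<in> halfC // relC w" and Y: "Y = XiBar w P A" by blast
      obtain c where c: "A = relC w `` {c}" "c \<in> halfC" using A by (rule quotientE)
      show "Y \<in> setX w // relX w P" unfolding Y c(1) cls[OF c(2)] by (rule quotientI[OF C1'[OF c(2)]])
    qed
  next
    show "setX w // relX w P \<subseteq> XiBar w P ` (halfC // relC w)"
    proof
      fix Y assume "Y \<in> setX w // relX w P"
      then obtain x where Y: "Y = relX w P `` {x}" and x: "x \<in> setX w" by (rule quotientE)
      obtain c where c: "c \<in> halfC" and d: "Xi P c - x \<in> LambdaP P" using C3'[OF x] by blast
      have "(Xi P c, x) \<in> relX w P" unfolding relX_def using C1'[OF c] x d by simp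
      then have "relX w P `` {x} = relX w P `` {Xi P c}" using equiv_class_eq[OF eX] by simp
      then have "Y = XiBar w P (relC w `` {c})" using Y cls[OF c] by simp
      moreover have "relC w `` {c} \<in> halfC // relC w" by (rule quotientI[OF c])
      ultimately show "Y \<in> XiBar w P ` (halfC // relC w)" by blast
    qed
  qed
  show ?thesis using part1 part2 inj img unfolding bij_betw_def by blast
qed

end
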